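(* Let $\mathbf A$ be a t-algebra of type $\tau$ and trace $\mathsf a$, let $\mathcal F$ be a functional clone $\tau$-algebra with value domain $\mathbf A$ and universe $F\subseteq A^{\mathsf a}$, and let $s\in\mathsf a$. Then (i) the map $\bar s:F\to A$, $\bar s(\varphi)=\varphi(s)$, is a t-homomorphism from the t-algebra $\mathcal F^\downarrow$ into $\mathbf A$; and (ii) $\mathcal F^\downarrow$ is t-isomorphic to a t-subalgebra of a t-power of $\mathbf A$ (namely via $\varphi\mapsto(\varphi(s))_{s\in\mathsf a}$ into the t-power with index set $\mathsf a$).
   Context: $\mathbb N=\{1,2,\dots\}$. A thread on $A$ is $s\in A^{\mathbb N}$; $r[a_1,\dots,a_n]$ is the thread with entries $a_i$ for $i\le n$ and $r_i$ for $i>n$. $r\equiv_{\mathbb N}s$ iff $\{i:r_i\ne s_i\}$ is finite; $[s]_{\mathbb N}$ denotes the class. A trace on $A$ is a nonempty $\mathsf a\subseteq A^{\mathbb N}$ that is a union of $\equiv_{\mathbb N}$-classes. For $f:A\to B$, $f^{\mathbb N}$ acts coordinatewise on threads. A t-algebra of type $\tau$ and trace $\mathsf a$ is $\mathbf A=(A,\mathsf a,\sigma^{\mathbf A})_{\sigma\in\tau}$ with each $\sigma^{\mathbf A}:\mathsf a\to A$ an arbitrary map. t-subalgebra of $\mathbf A$: $(B,\mathsf b,\sigma^{\mathbf A}|_{\mathsf b})$ with $B\subseteq A$, $\mathsf b\subseteq\mathsf a$ a trace on $B$, $\sigma^{\mathbf A}(s)\in B$ for all $s\in\mathsf b$. t-homomorphism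 $\mathbf A\to\mathbf B$ (traces $\mathsf a,\mathsf b$): a map $f:A\to B$ with $f^{\mathbb N}(\mathsf a)\subseteq\mathsf b$ and $f(\sigma^{\mathbf A}(s))=\sigma^{\mathbf B}(f^{\mathbb N}(s))$ for $s\in\mathsf a$; a t-isomorphism is a bijective $f$ with $f^{\mathbb N}:\mathsf a\to\mathsf b$ surjective. The t-product of $\mathbf A_j$ ($j\in J$) has universe $\prod_jA_j$, trace $\prod_j\mathsf a_j$ (where $(s^j)_j$ is identified with the thread whose $k$-th entry is $(s^j_k)_j$), and $\sigma((s^j)_j)=(\sigma^{\mathbf A_j}(s^j))_j$. Clone $\tau$-algebras: algebras $(C,q_n,\mathsf e_i,\sigma)$ with constants $\mathsf e_i$ ($i\ge1$), $\sigma\in\tau$, and $(n+1)$-ary $q_n$ satisfying (C1) $q_n(\mathsf e_i,\bar x)=x_i$ ($i\le n$); (C2) $q_n(\mathsf e_j,\bar x)=\mathsf e_j$ ($j>n$); (C3) $q_n(x,\mathsf e_1,\dots,\mathsf e_n)=x$; (C4) $q_n(x,\bar y)=q_k(x,\bar y,\mathsf e_{n+1},\dots,\mathsf e_k)$ ($k>n$); (C5) $q_n(q_n(x,\bar y),\bar z)=q_n(x,q_n(y_1,\bar z),\dots,q_n(y_n,\bar z))$. The full functional clone $\tau$-algebra $\mathbf A^{(\mathsf a)}$ has universe all maps $\mathsf a\to A$, $\mathsf e_i(s)=s_i$, $q_n(\varphi,\psi_1,\dots,\psi_n)(s)=\varphi(s[\psi_1(s),\dots,\psi_n(s)])$, $\sigma\mapsto\sigma^{\mathbf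 A}$; its subalgebras are the functional clone $\tau$-algebras with value domain $\mathbf A$. For a clone $\tau$-algebra $\mathcal C$ let $\epsilon^{\mathcal C}=(\mathsf e_1^{\mathcal C},\mathsf e_2^{\mathcal C},\dots)$ and $\pmb\epsilon=[\epsilon^{\mathcal C}]_{\mathbb N}$ (a trace on $C$); for $c\in C$ define $\varphi_c:\pmb\epsilon\to C$ by $\varphi_c(\epsilon^{\mathcal C}[s_1,\dots,s_n])=q_n^{\mathcal C}(c,s_1,\dots,s_n)$. The t-algebra under $\mathcal C$ is $\mathcal C^\downarrow=(C,\pmb\epsilon,\varphi_{\sigma^{\mathcal C}})_{\sigma\in\tau}$. *)

theory Defs
  imports "HOL-Library.FuncSet"
begin

text \<open>Threads are 0-indexed: the paper's coordinate i (i >= 1) is our coordinate i - 1.\<close>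

definition thread_on :: "'a set \<Rightarrow> (nat \<Rightarrow> 'a) \<Rightarrow> bool" where
  "thread_on A s \<longleftrightarrow> (\<forall>i. s i \<in> A)"

definition eqN :: "(nat \<Rightarrow> 'a) \<Rightarrow> (nat \<Rightarrow> 'a) \<Rightarrow> bool" where
  "eqN r s \<longleftrightarrow> finite {i. r i \<noteq> s i}"

definition is_trace :: "'a set \<Rightarrow> (nat \<Rightarrow> 'a) set \<Rightarrow> bool" where
  "is_trace A tr \<longleftrightarrow> tr \<noteq> {} \<and> (\<forall>s\<in>tr. thread_on A s)
     \<and> (\<forall>s\<in>tr. \<forall>r. thread_on A r \<and> eqN r s \<longrightarrow> r \<in> tr)"

definition tupd :: "(nat \<Rightarrow> 'a) \<Rightarrow> 'a list \<Rightarrow> nat \<Rightarrow> 'a" where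
  "tupd s as = (\<lambda>i. if i < length as then as ! i else s i)"

definition talg :: "'a set \<Rightarrow> (nat \<Rightarrow> 'a) set \<Rightarrow> ('t \<Rightarrow> (nat \<Rightarrow> 'a) \<Rightarrow> 'a) \<Rightarrow> bool" where
  "talg A tr ops \<longleftrightarrow> is_trace A tr \<and> (\<forall>\<sigma>. \<forall>s\<in>tr. ops \<sigma> s \<in> A)"

definition tsubalg ::
  "'a set \<Rightarrow> (nat \<Rightarrow> 'a) set \<Rightarrow> ('t \<Rightarrow> (nat \<Rightarrow> 'a) \<Rightarrow> 'a)
   \<Rightarrow> 'a set \<Rightarrow> (nat \<Rightarrow> 'a) set \<Rightarrow> bool" where
  "tsubalg A tr ops B trb \<longleftrightarrow> B \<subseteq> A \<and> trb \<subseteq> tr \<and> is_trace B trb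
     \<and> (\<forall>\<sigma>. \<forall>s\<in>trb. ops \<sigma> s \<in> B)"

definition thom ::
  "'a set \<Rightarrow> (nat \<Rightarrow> 'a) set \<Rightarrow> ('t \<Rightarrow> (nat \<Rightarrow> 'a) \<Rightarrow> 'a)
   \<Rightarrow> 'b set \<Rightarrow> (nat \<Rightarrow> 'b) set \<Rightarrow> ('t \<Rightarrow> (nat \<Rightarrow> 'b) \<Rightarrow> 'b)
   \<Rightarrow> ('a \<Rightarrow> 'b) \<Rightarrow> bool" where
  "thom A tra opsA B trb opsB f \<longleftrightarrow> f ` A \<subseteq> B
     \<and> (\<forall>s\<in>tra. f \<circ> s \<in> trb)
     \<and> (\<forall>\<sigma>. \<forall>s\<in>tra. f (opsA \<sigma> s) = opsB \<sigma> (f \<circ> s))"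

definition tiso ::
  "'a set \<Rightarrow> (nat \<Rightarrow> 'a) set \<Rightarrow> ('t \<Rightarrow> (nat \<Rightarrow> 'a) \<Rightarrow> 'a)
   \<Rightarrow> 'b set \<Rightarrow> (nat \<Rightarrow> 'b) set \<Rightarrow> ('t \<Rightarrow> (nat \<Rightarrow> 'b) \<Rightarrow> 'b)
   \<Rightarrow> ('a \<Rightarrow> 'b) \<Rightarrow> bool" where
  "tiso A tra opsA B trb opsB f \<longleftrightarrow> thom A tra opsA B trb opsB f
     \<and> bij_betw f A B \<and> (\<lambda>s. f \<circ> s) ` tra = trb"

definition tpow_univ :: "'j set \<Rightarrow> 'a set \<Rightarrow> ('j \<Rightarrow> 'a) set" where
  "tpow_univ J A = PiE J (\<lambda>_. A)"

definition tpow_trace :: "'j set \<Rightarrow> 'a set \<Rightarrow> (nat \<Rightarrow> 'a) set \<Rightarrow> (nat \<Rightarrow> ('j \<Rightarrow> 'a)) set" where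
  "tpow_trace J A tr = {T. (\<forall>k. T k \<in> PiE J (\<lambda>_. A)) \<and> (\<forall>j\<in>J. (\<lambda>k. T k j) \<in> tr)}"

definition tpow_ops :: "'j set \<Rightarrow> ('t \<Rightarrow> (nat \<Rightarrow> 'a) \<Rightarrow> 'a) \<Rightarrow> 't \<Rightarrow> (nat \<Rightarrow> ('j \<Rightarrow> 'a)) \<Rightarrow> ('j \<Rightarrow> 'a)" where
  "tpow_ops J ops \<sigma> T = (\<lambda>j\<in>J. ops \<sigma> (\<lambda>k. T k j))"

definition fproj :: "(nat \<Rightarrow> 'a) set \<Rightarrow> nat \<Rightarrow> (nat \<Rightarrow> 'a) \<Rightarrow> 'a" where
  "fproj tr i = (\<lambda>s\<in>tr. s i)"

definition fq :: "(nat \<Rightarrow> 'a) set \<Rightarrow> ((nat \<Rightarrow> 'a) \<Rightarrow> 'a) \<Rightarrow> ((nat \<Rightarrow> 'a) \<Rightarrow> 'a) list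
     \<Rightarrow> (nat \<Rightarrow> 'a) \<Rightarrow> 'a" where
  "fq tr \<phi> \<psi>s = (\<lambda>s\<in>tr. \<phi> (tupd s (map (\<lambda>\<psi>. \<psi> s) \<psi>s)))"

definition functional_clone ::
  "'a set \<Rightarrow> (nat \<Rightarrow> 'a) set \<Rightarrow> ('t \<Rightarrow> (nat \<Rightarrow> 'a) \<Rightarrow> 'a) \<Rightarrow> ((nat \<Rightarrow> 'a) \<Rightarrow> 'a) set \<Rightarrow> bool" where
  "functional_clone A tr ops F \<longleftrightarrow> F \<subseteq> (tr \<rightarrow>\<^sub>E A)
     \<and> (\<forall>i. fproj tr i \<in> F)
     \<and> (\<forall>\<phi>\<in>F. \<forall>\<psi>s. set \<psi>s \<subseteq> F \<longrightarrow> fq tr \<phi> \<psi>s \<in> F)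
     \<and> (\<forall>\<sigma>. restrict (ops \<sigma>) tr \<in> F)"

text \<open>The t-algebra under a clone tau-algebra (C, q, e, sigma), q c [s_1..s_n] = q_n(c,s_1,..,s_n)\<close>
definition down_trace :: "'c set \<Rightarrow> (nat \<Rightarrow> 'c) \<Rightarrow> (nat \<Rightarrow> 'c) set" where
  "down_trace C e = {t. thread_on C t \<and> eqN t e}"

definition down_phi :: "('c \<Rightarrow> 'c list \<Rightarrow> 'c) \<Rightarrow> (nat \<Rightarrow> 'c) \<Rightarrow> 'c \<Rightarrow> (nat \<Rightarrow> 'c) \<Rightarrow> 'c" where
  "down_phi q e c t = q c (map t [0..<(LEAST n. \<forall>i\<ge>n. t i = e i)])"

definition down_ops :: "('c \<Rightarrow> 'c list \<Rightarrow> 'c) \<Rightarrow> (nat \<Rightarrow> 'c) \<Rightarrow> ('t \<Rightarrow> 'c) \<Rightarrow> 't \<Rightarrow> (nat \<Rightarrow> 'c) \<Rightarrow> 'c" where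
  "down_ops q e sig \<sigma> = down_phi q e (sig \<sigma>)"

end

theory Submission
  imports Defs
begin

lemma ev_eq:
  assumes "eqN t e"
  shows "\<forall>i\<ge>(LEAST n. \<forall>i\<ge>n. t i = e i). t i = e i"
proof -
  from assms have "finite {i. t i \<noteq> e i}" by (simp add: eqN_def)
  then obtain m where "\<forall>i\<in>{i. t i \<noteq> e i}. i < m" using finite_nat_set_iff_bounded by blast
  hence "\<forall>i\<ge>m. t i = e i" by force
  hence "\<exists>n. \<forall>i\<ge>n. t i = e i" by blast
  thus ?thesis by (rule LeastI_ex)
qed

lemma key:
  assumes tal: "talg A tr ops" and fc: "functional_clone A tr ops F"
    and t: "t \<in> down_trace F (fproj tr)" and s: "s \<in> tr"
  shows "(\<lambda>i. t i s) \<in> tr"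
    and "down_ops (fq tr) (fproj tr) (\<lambda>\<sigma>. restrict (ops \<sigma>) tr) \<sigma> t s = ops \<sigma> (\<lambda>i. t i s)"
    and "down_ops (fq tr) (fproj tr) (\<lambda>\<sigma>. restrict (ops \<sigma>) tr) \<sigma> t \<in> F"
proof -
  have tF: "\<And>i. t i \<in> F" and eq: "eqN t (fproj tr)" using t by (auto simp: down_trace_def thread_on_def)
  have FA: "F \<subseteq> tr \<rightarrow>\<^sub>E A" using fc by (simp add: functional_clone_def)
  have tr: "is_trace A tr" using tal by (simp add: talg_def)
  define n where "n = (LEAST n. \<forall>i\<ge>n. t i = fproj tr i)"
  have big: "\<And>i. i \<ge> n \<Longrightarrow> t i = fproj tr i" using ev_eq[OF eq] n_def by blast
  have thr: "thread_on A (\<lambda>i. t i s)" using tF FA s unfolding thread_on_def by blast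
  have "{i. t i s \<noteq> s i} \<subseteq> {..<n}"
    using big s by (force simp: fproj_def not_less[symmetric])
  hence "eqN (\<lambda>i. t i s) s" unfolding eqN_def using finite_subset by blast
  thus ts: "(\<lambda>i. t i s) \<in> tr" using tr thr s unfolding is_trace_def by blast
  have tu: "tupd s (map (\<lambda>\<psi>. \<psi> s) (map t [0..<n])) = (\<lambda>i. t i s)"
    using big s by (auto simp: tupd_def fproj_def)
  show "down_ops (fq tr) (fproj tr) (\<lambda>\<sigma>. restrict (ops \<sigma>) tr) \<sigma> t s = ops \<sigma> (\<lambda>i. t i s)"
    unfolding down_ops_def down_phi_def fq_def n_def[symmetric] using s ts tu by simp
  have "set (map t [0..<n]) \<subseteq> F" using tF by auto
  thus "down_ops (fq tr) (fproj tr) (\<lambda>\<sigma>. restrict (ops \<sigma>) tr) \<sigma> t \<in> F"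
    using fc unfolding down_ops_def down_phi_def n_def[symmetric] functional_clone_def by blast
qed

theorem mainTheorem3:
  fixes A :: "'a set" and tr :: "(nat \<Rightarrow> 'a) set" and ops :: "'t \<Rightarrow> (nat \<Rightarrow> 'a) \<Rightarrow> 'a"
    and F :: "((nat \<Rightarrow> 'a) \<Rightarrow> 'a) set"
  assumes "talg A tr ops"
    and "functional_clone A tr ops F"
  shows "(\<forall>s\<in>tr. thom F (down_trace F (fproj tr)) (down_ops (fq tr) (fproj tr) (\<lambda>\<sigma>. restrict (ops \<sigma>) tr))
                    A tr ops (\<lambda>\<phi>. \<phi> s))
    \<and> (\<exists>B b. tsubalg (tpow_univ tr A) (tpow_trace tr A tr) (tpow_ops tr ops) B b
         \<and> tiso F (down_trace F (fproj tr)) (down_ops (fq tr) (fproj tr) (\<lambda>\<sigma>. restrict (ops \<sigma>) tr))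
                B b (tpow_ops tr ops) (\<lambda>\<phi>. \<lambda>s\<in>tr. \<phi> s))"
proof -
  note tal = assms(1) and fc = assms(2)
  define D where "D = down_trace F (fproj tr)"
  define Op where "Op = down_ops (fq tr) (fproj tr) (\<lambda>\<sigma>. restrict (ops \<sigma>) tr)"
  have FA: "F \<subseteq> tr \<rightarrow>\<^sub>E A" using fc by (simp add: functional_clone_def)
  have gid: "\<And>\<phi>. \<phi> \<in> F \<Longrightarrow> (\<lambda>s\<in>tr. \<phi> s) = \<phi>" using FA
    by (metis PiE_iff extensional_restrict subsetD)
  have tF: "\<And>t i. t \<in> D \<Longrightarrow> t i \<in> F" by (auto simp: D_def down_trace_def thread_on_def)
  have gD: "\<And>t. t \<in> D \<Longrightarrow> (\<lambda>\<phi>. \<lambda>s\<in>tr. \<phi> s) \<circ> t = t" using gid tF by (auto simp: fun_eq_iff)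
  obtain s0 where s0: "s0 \<in> tr" using tal unfolding talg_def is_trace_def by blast
  have OpF: "\<And>\<sigma> t. t \<in> D \<Longrightarrow> Op \<sigma> t \<in> F" using key(3)[OF tal fc _ s0] by (simp add: D_def Op_def)
  have Os: "\<And>\<sigma> t s. t \<in> D \<Longrightarrow> s \<in> tr \<Longrightarrow> Op \<sigma> t s = ops \<sigma> (\<lambda>i. t i s)"
    using key(2)[OF tal fc] by (simp add: D_def Op_def)
  have ts: "\<And>t s. t \<in> D \<Longrightarrow> s \<in> tr \<Longrightarrow> (\<lambda>i. t i s) \<in> tr"
    using key(1)[OF tal fc] by (simp add: D_def)
  have P1: "\<forall>s\<in>tr. thom F D Op A tr ops (\<lambda>\<phi>. \<phi> s)"
    unfolding thom_def using FA ts Os by (auto simp: comp_def)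
  have eD: "fproj tr \<in> D" using fc
    by (auto simp: D_def down_trace_def thread_on_def eqN_def functional_clone_def)
  have closed: "\<And>t r. t \<in> D \<Longrightarrow> thread_on F r \<Longrightarrow> eqN r t \<Longrightarrow> r \<in> D"
  proof -
    fix t r assume t: "t \<in> D" and r: "thread_on F r" "eqN r t"
    have "{i. r i \<noteq> fproj tr i} \<subseteq> {i. r i \<noteq> t i} \<union> {i. t i \<noteq> fproj tr i}" by auto
    moreover have "finite ({i. r i \<noteq> t i} \<union> {i. t i \<noteq> fproj tr i})"
      using r t by (auto simp: eqN_def D_def down_trace_def)
    ultimately have "eqN r (fproj tr)" unfolding eqN_def using finite_subset by blast
    thus "r \<in> D" using r by (simp add: D_def down_trace_def)
  qed
  have imgD: "(\<lambda>t. (\<lambda>\<phi>. \<lambda>s\<in>tr. \<phi> s) \<circ> t) ` D = D"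
  proof
    show "(\<lambda>t. (\<lambda>\<phi>. \<lambda>s\<in>tr. \<phi> s) \<circ> t) ` D \<subseteq> D" using gD by auto
    show "D \<subseteq> (\<lambda>t. (\<lambda>\<phi>. \<lambda>s\<in>tr. \<phi> s) \<circ> t) ` D" proof
      fix t assume "t \<in> D" thus "t \<in> (\<lambda>t. (\<lambda>\<phi>. \<lambda>s\<in>tr. \<phi> s) \<circ> t) ` D" using gD[of t] by (metis image_eqI)
    qed
  qed
  have opsP: "\<And>\<sigma> t. t \<in> D \<Longrightarrow> tpow_ops tr ops \<sigma> t = Op \<sigma> t"
  proof -
    fix \<sigma> t assume t: "t \<in> D"
    have "tpow_ops tr ops \<sigma> t = (\<lambda>s\<in>tr. Op \<sigma> t s)"
      unfolding tpow_ops_def using Os[OF t] by (auto simp: fun_eq_iff)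
    also have "\<dots> = Op \<sigma> t" using gid OpF[OF t] by simp
    finally show "tpow_ops tr ops \<sigma> t = Op \<sigma> t" .
  qed
  have sub: "tsubalg (tpow_univ tr A) (tpow_trace tr A tr) (tpow_ops tr ops) F D"
    unfolding tsubalg_def
  proof (intro conjI allI ballI)
    show "F \<subseteq> tpow_univ tr A" using FA by (simp add: tpow_univ_def)
    show "D \<subseteq> tpow_trace tr A tr"
      unfolding tpow_trace_def using FA tF ts by blast
    show "is_trace F D" unfolding is_trace_def
    proof (intro conjI ballI allI impI)
      show "D \<noteq> {}" using eD by blast
      fix t assume "t \<in> D" thus "thread_on F t" by (simp add: D_def down_trace_def)
    next
      fix t r assume "t \<in> D" "thread_on F r \<and> eqN r t" thus "r \<in> D" using closed by blast
    qed
    fix \<sigma> t assume "t \<in> D" thus "tpow_ops tr ops \<sigma> t \<in> F" using opsP OpF by simp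
  qed
  have inj: "inj_on (\<lambda>\<phi>. \<lambda>s\<in>tr. \<phi> s) F" by (rule inj_onI) (metis gid)
  have bij: "bij_betw (\<lambda>\<phi>. \<lambda>s\<in>tr. \<phi> s) F F"
    unfolding bij_betw_def using inj gid by (simp add: image_cong)
  have iso: "tiso F D Op F D (tpow_ops tr ops) (\<lambda>\<phi>. \<lambda>s\<in>tr. \<phi> s)"
    unfolding tiso_def thom_def using bij imgD gid gD opsP OpF by (auto simp: bij_betw_def)
  show ?thesis using P1 sub iso unfolding D_def[symmetric] Op_def[symmetric] by blast
qed

end
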